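(* If $S\in\Delta^1_n$, then $$E(S)=\frac{1}{\pi}\int_{-\infty}^{\infty}\frac{1}{z^2}\log\Big[1+\sum_{j=1}^{\lfloor n/2\rfloor}c_{2j}(S)\,z^{2j}\Big]\,dz .$$ In particular, if $S_1,S_2\in\Delta^1_n$ and $S_1\prec S_2$, then $E(S_1)<E(S_2)$.
   Context: A sidigraph is a digraph (no loops, at most one arc from $u$ to $v$) with a sign $\sigma(a)\in\{-1,1\}$ on each arc; its adjacency matrix $A(S)$ has entry $\sigma(v_i,v_j)$ if there is an arc from $v_i$ to $v_j$ and $0$ otherwise, and $\phi_S(z)=\det(zI-A(S))$. The energy of a sidigraph $S$ with eigenvalues $z_1,\dots,z_n$ is $E(S)=\sum_{j=1}^n|\Re z_j|$. The sign of a directed cycle is the product of its arc signs. $\Delta^1_n$ is the class of sidigraphs on $n$ vertices whose underlying digraph is bipartite and in which every directed cycle of length $\equiv 0\pmod 4$ is negative and every directed cycle of length $\equiv 2\pmod 4$ is positive. For $S\in\Delta^1_n$, $c_{2j}(S)$ is the number of linear subsidigraphs of $S$ of order $2j$ (subsidigraphs on $2j$ vertices in which every vertex has indegree and outdegree $1$); for such $S$ one has $\phi_S(z)=z^n+\sum_{j=1}^{\lfloor n/2\rfloor}(-1)^jc_{2j}(S)z^{n-2j}$. For $S_1,S_2\in\Delta^1_n$, write $S_1\preceq S_2$ if $c_{2j}(S_1)\le c_{2j}(S_2)$ for all $j=1,\dots,\lfloor n/2\rfloor$, and $S_1\prec S_2$ if moreover strict inequality holds for some $j$. *)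

theory Defs
  imports "HOL-Analysis.Analysis" "Jordan_Normal_Form.Char_Poly"
begin

text \<open>A sidigraph on the vertex set {0..<n} is encoded by its sign function
  sig :: nat => nat => int: there is an arc from i to j iff sig i j is nonzero,
  and then sig i j in {-1,1} is the sign of that arc.  No loops, and at most one
  arc from i to j is automatic from this encoding.\<close>

definition is_sidigraph :: "nat \<Rightarrow> (nat \<Rightarrow> nat \<Rightarrow> int) \<Rightarrow> bool" where
  "is_sidigraph n sig \<longleftrightarrow>
     (\<forall>i j. sig i j \<in> {-1, 0, 1}) \<and>
     (\<forall>i. sig i i = 0) \<and>
     (\<forall>i j. (i \<ge> n \<or> j \<ge> n) \<longrightarrow> sig i j = 0)"

definition arcs :: "(nat \<Rightarrow> nat \<Rightarrow> int) \<Rightarrow> (nat \<times> nat) set" where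
  "arcs sig = {(i, j). sig i j \<noteq> 0}"

definition adj_mat :: "nat \<Rightarrow> (nat \<Rightarrow> nat \<Rightarrow> int) \<Rightarrow> complex mat" where
  "adj_mat n sig = mat n n (\<lambda>(i, j). of_int (sig i j))"

definition char_pol :: "nat \<Rightarrow> (nat \<Rightarrow> nat \<Rightarrow> int) \<Rightarrow> complex poly" where
  "char_pol n sig = char_poly (adj_mat n sig)"

text \<open>Energy: sum of |Re z| over the eigenvalues z_1..z_n of A(S), counted with
  algebraic multiplicity (= multiplicity as roots of phi_S).\<close>

definition energy :: "nat \<Rightarrow> (nat \<Rightarrow> nat \<Rightarrow> int) \<Rightarrow> real" where
  "energy n sig = (\<Sum>z\<in>{z. poly (char_pol n sig) z = 0}.
                     of_nat (order z (char_pol n sig)) * \<bar>Re z\<bar>)"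

definition is_dicycle :: "(nat \<Rightarrow> nat \<Rightarrow> int) \<Rightarrow> nat list \<Rightarrow> bool" where
  "is_dicycle sig vs \<longleftrightarrow> length vs \<ge> 2 \<and> distinct vs \<and>
     (\<forall>i < length vs. sig (vs ! i) (vs ! ((i + 1) mod length vs)) \<noteq> 0)"

definition cycle_sign :: "(nat \<Rightarrow> nat \<Rightarrow> int) \<Rightarrow> nat list \<Rightarrow> int" where
  "cycle_sign sig vs = (\<Prod>i < length vs. sig (vs ! i) (vs ! ((i + 1) mod length vs)))"

definition bipartite_under :: "nat \<Rightarrow> (nat \<Rightarrow> nat \<Rightarrow> int) \<Rightarrow> bool" where
  "bipartite_under n sig \<longleftrightarrow>
     (\<exists>X \<subseteq> {..<n}. \<forall>i j. sig i j \<noteq> 0 \<longrightarrow> (i \<in> X \<longleftrightarrow> j \<notin> X))"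

definition Delta1 :: "nat \<Rightarrow> (nat \<Rightarrow> nat \<Rightarrow> int) set" where
  "Delta1 n = {sig. is_sidigraph n sig \<and> bipartite_under n sig \<and>
     (\<forall>vs. is_dicycle sig vs \<longrightarrow>
        (length vs mod 4 = 0 \<longrightarrow> cycle_sign sig vs = -1) \<and>
        (length vs mod 4 = 2 \<longrightarrow> cycle_sign sig vs = 1))}"

definition linear_subdigraphs :: "nat \<Rightarrow> (nat \<Rightarrow> nat \<Rightarrow> int) \<Rightarrow> nat \<Rightarrow>
    (nat set \<times> (nat \<times> nat) set) set" where
  "linear_subdigraphs n sig k = {(U, H). U \<subseteq> {..<n} \<and> card U = k \<and>
     H \<subseteq> arcs sig \<and> H \<subseteq> U \<times> U \<and>
     (\<forall>u\<in>U. card {v. (u, v) \<in> H} = 1 \<and> card {v. (v, u) \<in> H} = 1)}"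

definition c_lin :: "nat \<Rightarrow> (nat \<Rightarrow> nat \<Rightarrow> int) \<Rightarrow> nat \<Rightarrow> nat" where
  "c_lin n sig k = card (linear_subdigraphs n sig k)"

definition quasi_le :: "nat \<Rightarrow> (nat \<Rightarrow> nat \<Rightarrow> int) \<Rightarrow> (nat \<Rightarrow> nat \<Rightarrow> int) \<Rightarrow> bool" where
  "quasi_le n s1 s2 \<longleftrightarrow> (\<forall>j\<in>{1..n div 2}. c_lin n s1 (2*j) \<le> c_lin n s2 (2*j))"

definition quasi_less :: "nat \<Rightarrow> (nat \<Rightarrow> nat \<Rightarrow> int) \<Rightarrow> (nat \<Rightarrow> nat \<Rightarrow> int) \<Rightarrow> bool" where
  "quasi_less n s1 s2 \<longleftrightarrow> quasi_le n s1 s2 \<and>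
     (\<exists>j\<in>{1..n div 2}. c_lin n s1 (2*j) < c_lin n s2 (2*j))"

end

theory Submission
  imports Defs "HOL-Combinatorics.Cycles" "HOL-Real_Asymp.Real_Asymp"
begin


lemma sign_cycle_of_list:
  "distinct cs \<Longrightarrow> sign (cycle_of_list cs) = (-1) ^ (length cs - 1)"
proof (induction cs rule: cycle_of_list.induct)
  case (1 i j cs)
  have "sign (cycle_of_list (i # j # cs)) = sign (Transposition.transpose i j) * sign (cycle_of_list (j # cs))"
    by (simp add: sign_compose permutation_swap_id permutation_of_cycle)
  also have "\<dots> = - ((-1) ^ (length (j#cs) - 1))" using 1 by (simp add: sign_swap_id)
  also have "\<dots> = (-1) ^ (length (i # j # cs) - 1)" by simp
  finally show ?case .
next
  case ("2_1") then show ?case by simp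
next
  case ("2_2" v) then show ?case by simp
qed

lemma funpow_in_perm_set:
  assumes "p permutes S" "a \<in> S" shows "(p ^^ m) a \<in> S"
  using assms by (induction m) (auto simp: permutes_in_image)

lemma bip_alternate:
  assumes X: "\<forall>i j. sig i j \<noteq> 0 \<longrightarrow> (i \<in> X \<longleftrightarrow> j \<notin> X)"
    and arcs: "\<And>m. sig ((p ^^ m) a) (p ((p ^^ m) a)) \<noteq> 0"
  shows "((p ^^ m) a \<in> X) \<longleftrightarrow> ((a \<in> X) \<longleftrightarrow> even m)"
proof (induction m)
  case 0 then show ?case by simp
next
  case (Suc m)
  have "((p ^^ Suc m) a \<in> X) \<longleftrightarrow> ((p ^^ m) a \<notin> X)" using X arcs[of m] by auto
  then show ?case using Suc by auto
qed

lemma perm_orbit_closed: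
  assumes perm: "permutation p" and "p y \<in> set (support p a)"
  shows "y \<in> set (support p a)"
proof -
  let ?k = "least_power p a"
  have k: "(p ^^ ?k) a = a" "?k > 0" using least_power_of_permutation[OF perm] by auto
  have inj: "inj p" using perm permutation_bijective bij_is_inj by blast
  from assms(2) obtain i where i: "i < ?k" "p y = (p ^^ i) a" by auto
  show ?thesis
  proof (cases i)
    case 0
    have "p y = p ((p ^^ (?k - 1)) a)" using i 0 k
      by (metis Suc_pred' funpow.simps(2) funpow_0 o_apply)
    then have "y = (p ^^ (?k - 1)) a" using inj by (simp add: inj_eq)
    then show ?thesis using k by auto
  next
    case (Suc j)
    have "p y = p ((p ^^ j) a)" using i Suc by simp
    then have "y = (p ^^ j) a" using inj by (simp add: inj_eq)
    then show ?thesis using i Suc by auto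
  qed
qed

lemma prod_support:
  assumes perm: "permutation p"
  shows "(\<Prod>i\<in>set (support p a). h i (p i)) =
         (\<Prod>j<length (support p a). h (support p a ! j) (support p a ! ((j + 1) mod length (support p a))))"
proof -
  define cs where "cs = support p a"
  define k where "k = least_power p a"
  have k: "(p ^^ k) a = a" "k > 0" using least_power_of_permutation[OF perm] by (auto simp: k_def)
  have d: "distinct cs" using cycle_of_permutation[OF perm] by (simp add: cs_def)
  have lcs: "length cs = k" by (simp add: cs_def k_def)
  have nth: "\<And>j. j < k \<Longrightarrow> cs ! j = (p ^^ j) a" by (simp add: cs_def k_def del: upt.simps)
  have "(\<Prod>i\<in>set cs. h i (p i)) = (\<Prod>j<length cs. h (cs ! j) (p (cs ! j)))"
    using prod.reindex_bij_betw[OF bij_betw_nth[OF d refl refl], of "\<lambda>i. h i (p i)"] by simp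
  also have "\<dots> = (\<Prod>j<length cs. h (cs ! j) (cs ! ((j + 1) mod length cs)))"
  proof (rule prod.cong[OF refl])
    fix j assume j: "j \<in> {..<length cs}"
    then have jk: "j < k" using lcs by simp
    show "h (cs ! j) (p (cs ! j)) = h (cs ! j) (cs ! ((j + 1) mod length cs))"
    proof (cases "j + 1 < k")
      case True
      then have "cs ! ((j + 1) mod length cs) = (p ^^ (Suc j)) a" using nth lcs by simp
      then show ?thesis using nth[OF jk] by simp
    next
      case False
      then have jk1: "Suc j = k" using jk by simp
      have "p (cs ! j) = (p ^^ (Suc j)) a" using nth[OF jk] by simp
      then have "p (cs ! j) = a" using jk1 k by simp
      moreover have "cs ! ((j + 1) mod length cs) = a" using jk1 lcs nth[of 0] k by simp
      ultimately show ?thesis by simp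
    qed
  qed
  finally show ?thesis by (simp add: cs_def)
qed

lemma lemmaK:
  assumes D: "sig \<in> Delta1 n"
  shows "finite S \<Longrightarrow> S \<subseteq> {..<n} \<Longrightarrow> p permutes S \<Longrightarrow> (\<forall>i\<in>S. sig i (p i) \<noteq> 0) \<Longrightarrow>
    even (card S) \<and> sign p * (\<Prod>i\<in>S. sig i (p i)) = (-1) ^ (card S div 2)"
proof (induction "card S" arbitrary: S p rule: less_induct)
  case less
  note fin = less.prems(1) and sub = less.prems(2) and pS = less.prems(3) and arc = less.prems(4)
  have sd: "is_sidigraph n sig" and bip: "bipartite_under n sig"
    and cyc: "\<And>vs. is_dicycle sig vs \<Longrightarrow>
        (length vs mod 4 = 0 \<longrightarrow> cycle_sign sig vs = -1) \<and>
        (length vs mod 4 = 2 \<longrightarrow> cycle_sign sig vs = 1)"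
    using D by (auto simp: Delta1_def)
  show ?case
  proof (cases "S = {}")
    case True
    then have "p = id" using pS by (simp add: permutes_empty)
    then show ?thesis using True by simp
  next
    case False
    then obtain a where aS: "a \<in> S" by blast
    have perm: "permutation p" using pS fin permutes_imp_permutation by blast
    have "sig a a = 0" using sd by (simp add: is_sidigraph_def)
    then have pa: "p a \<noteq> a" using arc aS by auto
    define cs where "cs = support p a"
    define k where "k = least_power p a"
    have k: "(p ^^ k) a = a" "k > 0" using least_power_of_permutation[OF perm] by (auto simp: k_def)
    have k2: "k > 1" using least_power_gt_one[OF perm pa] by (simp add: k_def)
    have d: "distinct cs" using cycle_of_permutation[OF perm] by (simp add: cs_def)
    have lcs: "length cs = k" by (simp add: cs_def k_def)
    have nth: "\<And>j. j < k \<Longrightarrow> cs ! j = (p ^^ j) a" by (simp add: cs_def k_def del: upt.simps)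
    have orbS: "\<And>m. (p ^^ m) a \<in> S" using funpow_in_perm_set[OF pS aS] .
    have csS: "set cs \<subseteq> S" using orbS by (auto simp: cs_def)
    define q where "q = (\<lambda>y. if y \<in> S - set cs then p y else y)"
    have qS: "q permutes (S - set cs)" unfolding q_def cs_def using semidecomposition[OF pS fin] .
    have pq: "p = cycle_of_list cs \<circ> q"
    proof
      fix y
      show "p y = (cycle_of_list cs \<circ> q) y"
      proof (cases "y \<in> set cs")
        case True
        then show ?thesis using cycle_restrict[OF perm, of y a] by (simp add: q_def cs_def)
      next
        case False
        have "p y \<notin> set cs" using perm_orbit_closed[OF perm, of y a] False by (auto simp: cs_def)
        moreover have "y \<notin> S \<Longrightarrow> p y = y" using pS by (simp add: permutes_not_in)
        ultimately show ?thesis using False by (auto simp: q_def id_outside_supp)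
      qed
    qed
    have fin': "finite (S - set cs)" using fin by simp
    have permq: "permutation q" using qS fin' permutes_imp_permutation by blast
    have sgn: "sign p = (-1) ^ (k - 1) * sign q"
      using pq sign_compose[OF permutation_of_cycle permq, of cs] sign_cycle_of_list[OF d] lcs by simp
    have prod_split: "(\<Prod>i\<in>S. sig i (p i)) = (\<Prod>i\<in>set cs. sig i (p i)) * (\<Prod>i\<in>S - set cs. sig i (q i))"
    proof -
      have "(\<Prod>i\<in>S. sig i (p i)) = (\<Prod>i\<in>set cs. sig i (p i)) * (\<Prod>i\<in>S - set cs. sig i (p i))"
        using prod.subset_diff[OF csS fin] by (simp add: mult.commute)
      also have "(\<Prod>i\<in>S - set cs. sig i (p i)) = (\<Prod>i\<in>S - set cs. sig i (q i))"
        by (rule prod.cong) (auto simp: q_def)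
      finally show ?thesis .
    qed
    have cs_sign: "(\<Prod>i\<in>set cs. sig i (p i)) = cycle_sign sig cs"
      using prod_support[OF perm, of "\<lambda>i j. sig i j" a] by (simp add: cycle_sign_def cs_def)
    have dicyc: "is_dicycle sig cs"
      unfolding is_dicycle_def
    proof (intro conjI allI impI)
      show "2 \<le> length cs" using lcs k2 by simp
      show "distinct cs" by fact
      fix i assume i: "i < length cs"
      have "sig (cs ! i) (p (cs ! i)) \<noteq> 0" using arc csS i by (meson nth_mem subsetD)
      moreover have "p (cs ! i) = cs ! ((i + 1) mod length cs)"
      proof (cases "i + 1 < k")
        case True then show ?thesis using nth i lcs by simp
      next
        case False
        then have "Suc i = k" using i lcs by simp
        then have "p (cs ! i) = (p ^^ Suc i) a" using nth[of i] i lcs by (metis funpow.simps(2) o_apply)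
        then show ?thesis using nth[of 0] \<open>Suc i = k\<close> lcs k by simp
      qed
      ultimately show "sig (cs ! i) (cs ! ((i + 1) mod length cs)) \<noteq> 0" by simp
    qed
    have evk: "even k"
    proof -
      obtain X where X: "\<forall>i j. sig i j \<noteq> 0 \<longrightarrow> (i \<in> X \<longleftrightarrow> j \<notin> X)"
        using bip by (auto simp: bipartite_under_def)
      have "\<And>m. sig ((p ^^ m) a) (p ((p ^^ m) a)) \<noteq> 0" using arc orbS by blast
      from bip_alternate[OF X this, of k] k show ?thesis by (cases "a \<in> X") auto
    qed
    have cyc_part: "(-1) ^ (k - 1) * cycle_sign sig cs = (-1) ^ (k div 2)"
    proof -
      have "odd (k - 1)" using evk k by simp
      then have m1: "(-1::int) ^ (k - 1) = -1" by simp
      have "k mod 4 = 0 \<or> k mod 4 = 2" using evk by presburger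
      then show ?thesis
      proof
        assume h: "k mod 4 = 0"
        then have "cycle_sign sig cs = -1" using cyc[OF dicyc] lcs by simp
        moreover have "even (k div 2)" using h by presburger
        ultimately show ?thesis using m1 by simp
      next
        assume h: "k mod 4 = 2"
        then have "cycle_sign sig cs = 1" using cyc[OF dicyc] lcs by simp
        moreover have "odd (k div 2)" using h by presburger
        ultimately show ?thesis using m1 by simp
      qed
    qed
    have cardcs: "card (set cs) = k" using d lcs distinct_card by blast
    have cardS: "card S = k + card (S - set cs)"
      using card_Diff_subset[OF _ csS] fin csS cardcs card_mono[OF fin csS] by (simp add: finite_subset)
    have lt: "card (S - set cs) < card S" using cardS k by simp
    have IH: "even (card (S - set cs)) \<and> sign q * (\<Prod>i\<in>S - set cs. sig i (q i)) = (-1) ^ (card (S - set cs) div 2)"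
      using less.hyps[OF lt fin' _ qS] sub arc by (auto simp: q_def)
    have "sign p * (\<Prod>i\<in>S. sig i (p i)) =
          ((-1) ^ (k - 1) * cycle_sign sig cs) * (sign q * (\<Prod>i\<in>S - set cs. sig i (q i)))"
      using sgn prod_split cs_sign by (simp add: algebra_simps)
    also have "\<dots> = (-1) ^ (k div 2) * (-1) ^ (card (S - set cs) div 2)" using cyc_part IH by simp
    also have "\<dots> = (-1) ^ (card S div 2)"
      using cardS evk IH by (simp add: power_add[symmetric] div_plus_div_distrib_dvd_left)
    finally show ?thesis using cardS evk IH by simp
  qed
qed

definition Vset :: "nat \<Rightarrow> (nat \<Rightarrow> nat \<Rightarrow> int) \<Rightarrow> (nat \<Rightarrow> nat) set" where
  "Vset n sig = {p. p permutes {0..<n} \<and> (\<forall>i. p i \<noteq> i \<longrightarrow> sig i (p i) \<noteq> 0)}"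

definition supp :: "(nat \<Rightarrow> nat) \<Rightarrow> nat set" where
  "supp p = {i. p i \<noteq> i}"

lemma permutes_supp: "p permutes S \<Longrightarrow> p permutes supp p"
  unfolding permutes_def supp_def by auto

lemma supp_sub: "p permutes {0..<n} \<Longrightarrow> supp p \<subseteq> {..<n}"
  unfolding supp_def using permutes_not_in by fastforce

lemma finite_Vset: "finite (Vset n sig)"
proof -
  have "Vset n sig \<subseteq> {p. p permutes {0..<n}}" by (auto simp: Vset_def)
  then show ?thesis using finite_permutations[of "{0..<n}"] finite_subset by blast
qed

lemma Vset_even_sign:
  assumes D: "sig \<in> Delta1 n" and p: "p \<in> Vset n sig"
  shows "even (card (supp p)) \<and> sign p * (\<Prod>i\<in>supp p. sig i (p i)) = (-1) ^ (card (supp p) div 2)"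
proof -
  have pn: "p permutes {0..<n}" using p by (simp add: Vset_def)
  have sub: "supp p \<subseteq> {..<n}" using supp_sub[OF pn] .
  have fin: "finite (supp p)" using sub finite_subset by blast
  show ?thesis
    by (rule lemmaK[OF D fin sub permutes_supp[OF pn]]) (use p in \<open>auto simp: Vset_def supp_def\<close>)
qed

lemma poly_char_pol_perm:
  "poly (char_pol n sig) z = (\<Sum>p\<in>{p. p permutes {0..<n}}. of_int (sign p) *
      (\<Prod>i=0..<n. (if p i = i then z else 0) - of_int (sig i (p i))))"
proof -
  have A: "adj_mat n sig \<in> carrier_mat n n" by (simp add: adj_mat_def)
  have M: "- char_matrix (adj_mat n sig) z \<in> carrier_mat n n" using A by simp
  have "poly (char_pol n sig) z = det (- char_matrix (adj_mat n sig) z)"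
    unfolding char_pol_def using char_poly_matrix[OF A] .
  also have "\<dots> = (\<Sum>p\<in>{p. p permutes {0..<n}}. of_int (sign p) *
      (\<Prod>i=0..<n. (- char_matrix (adj_mat n sig) z) $$ (i, p i)))"
    using det_def'[OF M] by simp
  also have "\<dots> = (\<Sum>p\<in>{p. p permutes {0..<n}}. of_int (sign p) *
      (\<Prod>i=0..<n. (if p i = i then z else 0) - of_int (sig i (p i))))"
  proof (rule sum.cong[OF refl])
    fix p assume "p \<in> {p. p permutes {0..<n}}"
    then have pi: "\<And>i. i < n \<Longrightarrow> p i < n" by (simp add: permutes_in_image)
    show "of_int (sign p) * (\<Prod>i=0..<n. (- char_matrix (adj_mat n sig) z) $$ (i, p i)) =
      of_int (sign p) * (\<Prod>i=0..<n. (if p i = i then z else 0) - of_int (sig i (p i)))"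
      by (rule arg_cong[where f = "\<lambda>x. _ * x"], rule prod.cong[OF refl])
        (use pi in \<open>auto simp: char_matrix_def adj_mat_def\<close>)
  qed
  finally show ?thesis .
qed

lemma term_eval:
  fixes z :: complex
  assumes D: "sig \<in> Delta1 n" and pn: "p permutes {0..<n}"
  shows "of_int (sign p) * (\<Prod>i=0..<n. (if p i = i then z else 0) - of_int (sig i (p i))) =
    (if p \<in> Vset n sig then (-1) ^ (card (supp p) div 2) * z ^ (n - card (supp p)) else 0)"
proof -
  have sd: "is_sidigraph n sig" using D by (simp add: Delta1_def)
  have sii: "\<And>i. sig i i = 0" using sd by (simp add: is_sidigraph_def)
  have sub: "supp p \<subseteq> {0..<n}" using supp_sub[OF pn] by auto
  have fin: "finite (supp p)" using sub finite_subset by blast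
  have "(\<Prod>i=0..<n. (if p i = i then z else 0) - of_int (sig i (p i))) =
      (\<Prod>i\<in>supp p. (if p i = i then z else 0) - of_int (sig i (p i))) *
      (\<Prod>i\<in>{0..<n} - supp p. (if p i = i then z else 0) - of_int (sig i (p i)))"
    using prod.subset_diff[OF sub] by (simp add: mult.commute)
  also have "(\<Prod>i\<in>supp p. (if p i = i then z else 0) - of_int (sig i (p i))) =
      (\<Prod>i\<in>supp p. - of_int (sig i (p i)))"
    by (rule prod.cong) (auto simp: supp_def)
  also have "\<dots> = (-1) ^ card (supp p) * of_int (\<Prod>i\<in>supp p. sig i (p i))"
    by (simp add: prod_uminus)
  also have "(\<Prod>i\<in>{0..<n} - supp p. (if p i = i then z else 0) - of_int (sig i (p i))) =
      (\<Prod>i\<in>{0..<n} - supp p. z)"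
    by (rule prod.cong) (auto simp: supp_def sii)
  also have "\<dots> = z ^ (n - card (supp p))"
    using card_Diff_subset[OF fin sub] by simp
  finally have P: "(\<Prod>i=0..<n. (if p i = i then z else 0) - of_int (sig i (p i))) =
      (-1) ^ card (supp p) * of_int (\<Prod>i\<in>supp p. sig i (p i)) * z ^ (n - card (supp p))" .
  show ?thesis
  proof (cases "p \<in> Vset n sig")
    case True
    from Vset_even_sign[OF D True] have ev: "even (card (supp p))"
      and sg: "sign p * (\<Prod>i\<in>supp p. sig i (p i)) = (-1) ^ (card (supp p) div 2)" by auto
    have "of_int (sign p) * (\<Prod>i=0..<n. (if p i = i then z else 0) - of_int (sig i (p i))) =
      (-1) ^ card (supp p) * of_int (sign p * (\<Prod>i\<in>supp p. sig i (p i))) * z ^ (n - card (supp p))"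
      unfolding P by (simp add: algebra_simps)
    also have "\<dots> = (-1) ^ (card (supp p) div 2) * z ^ (n - card (supp p))"
      using ev sg by simp
    finally show ?thesis using True by simp
  next
    case False
    then obtain i where "p i \<noteq> i" "sig i (p i) = 0" using pn by (auto simp: Vset_def)
    then have "(\<Prod>i\<in>supp p. sig i (p i)) = 0" using fin by (auto simp: supp_def intro!: prod_zero)
    then show ?thesis using False P by simp
  qed
qed

lemma poly_char_pol_V:
  fixes z :: complex
  assumes D: "sig \<in> Delta1 n"
  shows "poly (char_pol n sig) z = (\<Sum>p\<in>Vset n sig. (-1) ^ (card (supp p) div 2) * z ^ (n - card (supp p)))"
proof -
  have sub: "Vset n sig \<subseteq> {p. p permutes {0..<n}}" by (auto simp: Vset_def)
  have "poly (char_pol n sig) z = (\<Sum>p\<in>{p. p permutes {0..<n}}.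
      (if p \<in> Vset n sig then (-1) ^ (card (supp p) div 2) * z ^ (n - card (supp p)) else 0))"
    unfolding poly_char_pol_perm by (rule sum.cong[OF refl]) (use term_eval[OF D] in auto)
  also have "\<dots> = (\<Sum>p\<in>Vset n sig. (-1) ^ (card (supp p) div 2) * z ^ (n - card (supp p)))"
    using sum.inter_filter[OF finite_permutations[of "{0..<n}"], symmetric] sub
    by (simp add: sum.If_cases[OF finite_permutations] Int_absorb1)
  finally show ?thesis .
qed

lemma poly_char_pol_ix:
  assumes D: "sig \<in> Delta1 n" and x: "x \<noteq> 0"
  shows "poly (char_pol n sig) (\<i> / of_real x) =
    (\<i> / of_real x) ^ n * of_real (\<Sum>p\<in>Vset n sig. x ^ card (supp p))"
proof -
  have "poly (char_pol n sig) (\<i> / of_real x) =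
      (\<Sum>p\<in>Vset n sig. (\<i> / of_real x) ^ n * of_real (x ^ card (supp p)))"
    unfolding poly_char_pol_V[OF D]
  proof (rule sum.cong[OF refl])
    fix p assume p: "p \<in> Vset n sig"
    define k where "k = card (supp p)"
    have ev: "even k" using Vset_even_sign[OF D p] by (simp add: k_def)
    have pn: "p permutes {0..<n}" using p by (simp add: Vset_def)
    have "k \<le> n" unfolding k_def using card_mono[OF _ supp_sub[OF pn]] by simp
    then obtain m where nm: "n = k + m" by (metis le_add_diff_inverse)
    obtain j where kj: "k = 2 * j" using ev by blast
    have "(\<i> / of_real x) ^ n * of_real (x ^ k) = (\<i> / of_real x) ^ m * ((\<i> / of_real x) ^ k * of_real x ^ k)"
      by (simp add: nm power_add)
    also have "(\<i> / of_real x) ^ k * of_real x ^ k = (\<i>::complex) ^ k"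
      using x by (simp add: power_divide)
    also have "(\<i>::complex) ^ k = (-1) ^ j" by (simp add: kj power_mult)
    finally show "(-1) ^ (card (supp p) div 2) * (\<i> / of_real x) ^ (n - card (supp p)) =
        (\<i> / complex_of_real x) ^ n * complex_of_real (x ^ card (supp p))"
      using nm kj by (simp add: k_def[symmetric] mult.commute)
  qed
  also have "\<dots> = (\<i> / of_real x) ^ n * of_real (\<Sum>p\<in>Vset n sig. x ^ card (supp p))"
    by (simp add: sum_distrib_left)
  finally show ?thesis .
qed

lemma c_lin_Vset:
  assumes D: "sig \<in> Delta1 n"
  shows "c_lin n sig k = card {p\<in>Vset n sig. card (supp p) = k}"
proof -
  have sd: "is_sidigraph n sig" using D by (simp add: Delta1_def)
  have sii: "\<And>i. sig i i = 0" using sd by (simp add: is_sidigraph_def)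
  define \<Phi> where "\<Phi> = (\<lambda>p::nat\<Rightarrow>nat. (supp p, (\<lambda>i. (i, p i)) ` supp p))"
  let ?A = "{p\<in>Vset n sig. card (supp p) = k}"
  have "bij_betw \<Phi> ?A (linear_subdigraphs n sig k)"
  proof (rule bij_betw_imageI)
    show "inj_on \<Phi> ?A"
    proof (rule inj_onI)
      fix p q assume p: "p \<in> ?A" and q: "q \<in> ?A" and e: "\<Phi> p = \<Phi> q"
      have sh: "supp p = supp q \<and> (\<lambda>i. (i, p i)) ` supp p = (\<lambda>i. (i, q i)) ` supp q"
        using e unfolding \<Phi>_def prod.inject by assumption
      then have s: "supp p = supp q" by blast
      from sh have h: "(\<lambda>i. (i, p i)) ` supp p = (\<lambda>i. (i, q i)) ` supp q" by blast
      show "p = q"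
      proof
        fix i show "p i = q i"
        proof (cases "i \<in> supp p")
          case True
          then have "(i, p i) \<in> (\<lambda>i. (i, q i)) ` supp q" using h by (metis image_eqI)
          then show ?thesis by blast
        next
          case False
          then have "i \<notin> supp q" using s by simp
          then show ?thesis using False unfolding supp_def by simp
        qed
      qed
    qed
  next
    show "\<Phi> ` ?A = linear_subdigraphs n sig k"
    proof
      show "\<Phi> ` ?A \<subseteq> linear_subdigraphs n sig k"
      proof
        fix L assume "L \<in> \<Phi> ` ?A"
        then obtain p where p: "p \<in> Vset n sig" "card (supp p) = k" and L: "L = \<Phi> p" by blast
        have pn: "p permutes {0..<n}" using p by (simp add: Vset_def)
        have inj: "inj p" using pn permutes_inj by blast
        have pin: "\<And>i. i \<in> supp p \<Longrightarrow> p i \<in> supp p"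
          using inj by (auto simp: supp_def inj_eq)
        have out: "\<And>u. u \<in> supp p \<Longrightarrow> {v. (u, v) \<in> (\<lambda>i. (i, p i)) ` supp p} = {p u}" by auto
        have inn: "\<And>u. u \<in> supp p \<Longrightarrow> {v. (v, u) \<in> (\<lambda>i. (i, p i)) ` supp p} = {inv_into UNIV p u}"
        proof -
          fix u assume u: "u \<in> supp p"
          have pi: "p (inv_into UNIV p u) = u" using pn permutes_inverses(1) by fast
          have "inv_into UNIV p u \<in> supp p"
          proof (rule ccontr)
            assume "inv_into UNIV p u \<notin> supp p"
            then have "p (inv_into UNIV p u) = inv_into UNIV p u" by (simp add: supp_def)
            then have "p u = u" using pi by simp
            then show False using u by (simp add: supp_def)
          qed
          then show "{v. (v, u) \<in> (\<lambda>i. (i, p i)) ` supp p} = {inv_into UNIV p u}"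
            using pi inj by (auto simp: inj_eq)
        qed
        have H1: "(\<lambda>i. (i, p i)) ` supp p \<subseteq> arcs sig"
          using p(1) by (auto simp: Vset_def arcs_def supp_def)
        have H2: "(\<lambda>i. (i, p i)) ` supp p \<subseteq> supp p \<times> supp p" using pin by auto
        have deg: "\<forall>u\<in>supp p. card {v. (u, v) \<in> (\<lambda>i. (i, p i)) ` supp p} = 1 \<and>
            card {v. (v, u) \<in> (\<lambda>i. (i, p i)) ` supp p} = 1"
          using out inn by simp
        have "supp p \<subseteq> {..<n}" using supp_sub[OF pn] .
        then show "L \<in> linear_subdigraphs n sig k"
          unfolding L \<Phi>_def linear_subdigraphs_def mem_Collect_eq case_prod_conv
          using p(2) H1 H2 deg by blast
      qed
    next
      show "linear_subdigraphs n sig k \<subseteq> \<Phi> ` ?A"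
      proof
        fix L assume L: "L \<in> linear_subdigraphs n sig k"
        obtain U H where LUH: "L = (U, H)" by (cases L)
        have LL: "U \<subseteq> {..<n} \<and> card U = k \<and> H \<subseteq> arcs sig \<and> H \<subseteq> U \<times> U \<and>
           (\<forall>u\<in>U. card {v. (u, v) \<in> H} = 1 \<and> card {v. (v, u) \<in> H} = 1)"
          using L unfolding LUH linear_subdigraphs_def by blast
        then have U: "U \<subseteq> {..<n}" "card U = k" and Ha: "H \<subseteq> arcs sig" and HU: "H \<subseteq> U \<times> U"
          and deg: "\<And>u. u \<in> U \<Longrightarrow> card {v. (u, v) \<in> H} = 1 \<and> card {v. (v, u) \<in> H} = 1"
          by blast+
        have ex1out: "\<exists>!v. (u, v) \<in> H" if u: "u \<in> U" for u
        proof -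
          have "card {v. (u, v) \<in> H} = Suc 0" using deg[OF u] by simp
          then obtain w where "{v. (u, v) \<in> H} = {w}" by (auto simp: card_1_singleton_iff)
          then show ?thesis by (metis mem_Collect_eq singleton_iff)
        qed
        have ex1in: "\<exists>!v. (v, u) \<in> H" if u: "u \<in> U" for u
        proof -
          have "card {v. (v, u) \<in> H} = Suc 0" using deg[OF u] by simp
          then obtain w where "{v. (v, u) \<in> H} = {w}" by (auto simp: card_1_singleton_iff)
          then show ?thesis by (metis mem_Collect_eq singleton_iff)
        qed
        define p where "p = (\<lambda>i. if i \<in> U then (THE v. (i, v) \<in> H) else i)"
        have pH: "(i, p i) \<in> H" if i: "i \<in> U" for i
        proof -
          have "(i, THE v. (i, v) \<in> H) \<in> H" using theI'[OF ex1out[OF i]] .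
          then show ?thesis using i by (simp add: p_def)
        qed
        have pH2: "p i = v" if e: "(i, v) \<in> H" for i v
        proof -
          have i: "i \<in> U" using e HU by blast
          show ?thesis using ex1out[OF i] pH[OF i] e by blast
        qed
        have pU: "p i \<in> U" if "i \<in> U" for i using pH[OF that] HU by blast
        have sii': "(i, i) \<notin> H" for i using Ha sii by (auto simp: arcs_def)
        have pne: "p i \<noteq> i" if i: "i \<in> U" for i
          using pH[OF i] sii' by metis
        have pout: "p i = i" if "i \<notin> U" for i using that by (simp add: p_def)
        have suppU: "supp p = U" using pne pout unfolding supp_def by blast
        have finU: "finite U" using U finite_subset by blast
        have injU: "inj_on p U"
        proof (rule inj_onI)
          fix x y assume xy: "x \<in> U" "y \<in> U" "p x = p y"
          then have "(x, p x) \<in> H" "(y, p x) \<in> H" using pH by metis+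
          then show "x = y" using ex1in[OF pU[OF xy(1)]] by blast
        qed
        have pU': "p permutes U"
          using inj_imp_permutes[OF injU finU] pU pout by blast
        have "U \<subseteq> {0..<n}" using U(1) by auto
        then have pn: "p permutes {0..<n}" using permutes_subset[OF pU'] by blast
        have arcp: "\<forall>i. p i \<noteq> i \<longrightarrow> sig i (p i) \<noteq> 0"
        proof (intro allI impI)
          fix i assume "p i \<noteq> i"
          then have "i \<in> U" using pout by blast
          then have "(i, p i) \<in> arcs sig" using pH Ha by blast
          then show "sig i (p i) \<noteq> 0" by (simp add: arcs_def)
        qed
        have "p \<in> ?A" using pn arcp suppU U(2) by (simp add: Vset_def)
        moreover have "\<Phi> p = L"
        proof -
          have "(\<lambda>i. (i, p i)) ` U = H"
          proof
            show "(\<lambda>i. (i, p i)) ` U \<subseteq> H" using pH by blast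
            show "H \<subseteq> (\<lambda>i. (i, p i)) ` U"
            proof
              fix e assume e: "e \<in> H"
              obtain i v where iv: "e = (i, v)" by (cases e)
              have "i \<in> U" using e iv HU by blast
              moreover have "p i = v" using pH2 e iv by simp
              ultimately show "e \<in> (\<lambda>i. (i, p i)) ` U" using iv by blast
            qed
          qed
          then show ?thesis using suppU LUH by (simp add: \<Phi>_def)
        qed
        ultimately show "L \<in> \<Phi> ` ?A" by blast
      qed
    qed
  qed
  then show ?thesis unfolding c_lin_def using bij_betw_same_card by metis
qed

lemma W_eq:
  fixes x :: real
  assumes D: "sig \<in> Delta1 n"
  shows "(\<Sum>p\<in>Vset n sig. x ^ card (supp p)) =
    1 + (\<Sum>j = 1..n div 2. real (c_lin n sig (2*j)) * x^(2*j))"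
proof -
  define c where "c k = c_lin n sig k" for k
  have cV: "c k = card {p\<in>Vset n sig. card (supp p) = k}" for k
    using c_lin_Vset[OF D] by (simp add: c_def)
  have le: "card (supp p) \<le> n" if "p \<in> Vset n sig" for p
  proof -
    have "p permutes {0..<n}" using that by (simp add: Vset_def)
    then show ?thesis using card_mono[OF _ supp_sub] by fastforce
  qed
  have "(\<Sum>p\<in>Vset n sig. x ^ card (supp p)) =
      (\<Sum>k\<in>{0..n}. \<Sum>p\<in>{p \<in> Vset n sig. card (supp p) = k}. x ^ card (supp p))"
    by (rule sum.group[symmetric]) (use finite_Vset le in auto)
  also have "\<dots> = (\<Sum>k\<in>{0..n}. real (c k) * x ^ k)"
    by (rule sum.cong[OF refl]) (simp add: cV)
  also have "\<dots> = real (c 0) * x ^ 0 + (\<Sum>k\<in>{1..n}. real (c k) * x ^ k)"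
    by (simp add: sum.atLeast_Suc_atMost)
  also have "c 0 = 1"
  proof -
    have "{p \<in> Vset n sig. card (supp p) = 0} = {id}"
    proof
      show "{p \<in> Vset n sig. card (supp p) = 0} \<subseteq> {id}"
      proof
        fix p assume p: "p \<in> {p \<in> Vset n sig. card (supp p) = 0}"
        then have pn: "p permutes {0..<n}" by (simp add: Vset_def)
        have "finite (supp p)" using supp_sub[OF pn] finite_subset by blast
        then have "supp p = {}" using p by simp
        then have "p = id" by (auto simp: supp_def)
        then show "p \<in> {id}" by simp
      qed
      show "{id} \<subseteq> {p \<in> Vset n sig. card (supp p) = 0}"
        by (simp add: Vset_def supp_def permutes_id)
    qed
    then show ?thesis by (simp add: cV)
  qed
  also have "(\<Sum>k\<in>{1..n}. real (c k) * x ^ k) = (\<Sum>k\<in>(\<lambda>j. 2*j) ` {1..n div 2}. real (c k) * x ^ k)"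
  proof (rule sum.mono_neutral_right)
    show "finite {1..n}" by simp
    show "(\<lambda>j. 2*j) ` {1..n div 2} \<subseteq> {1..n}" by auto
    show "\<forall>k\<in>{1..n} - (\<lambda>j. 2*j) ` {1..n div 2}. real (c k) * x ^ k = 0"
    proof
      fix k assume k: "k \<in> {1..n} - (\<lambda>j. 2*j) ` {1..n div 2}"
      have "odd k"
      proof
        assume "even k"
        then obtain j where "k = 2 * j" by blast
        then have "k \<in> (\<lambda>j. 2*j) ` {1..n div 2}" using k by auto
        then show False using k by blast
      qed
      then have "{p \<in> Vset n sig. card (supp p) = k} = {}"
        using Vset_even_sign[OF D] by fastforce
      then have "c k = 0" unfolding cV by (simp only: card.empty)
      then show "real (c k) * x ^ k = 0" by simp
    qed
  qed
  also have "\<dots> = (\<Sum>j = 1..n div 2. real (c (2*j)) * x^(2*j))"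
    by (subst sum.reindex) (auto simp: inj_on_def)
  finally show ?thesis by (simp add: c_def)
qed





definition Q1 :: "real \<Rightarrow> real \<Rightarrow> real \<Rightarrow> real" where "Q1 q r x = 1 - 2*q*x + r*x^2"
definition Q2 :: "real \<Rightarrow> real \<Rightarrow> real \<Rightarrow> real" where "Q2 q r x = 1 + 2*q*x + r*x^2"
definition Lf where "Lf q r x = (ln (Q1 q r x) + ln (Q2 q r x)) / 2"
definition Gf where "Gf p q r x = q/2 * (ln (Q1 q r x) - ln (Q2 q r x)) +
   p * (arctan ((r*x - q)/p) + arctan ((r*x + q)/p))"
definition Ff where "Ff p q r x = (if x = 0 then 0 else - Lf q r x / x) + Gf p q r x"

context
  fixes p q r :: real
  assumes p: "p > 0" and r: "r = p^2 + q^2"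
begin

lemma p0: "p \<noteq> 0" using p by simp

lemma r_pos: "r > 0" using p r by (simp add: add_pos_nonneg)

lemma Q1_pos: "Q1 q r x > 0"
proof -
  have "r * Q1 q r x = (r*x - q)^2 + p^2" using r by (simp add: Q1_def power2_eq_square algebra_simps)
  moreover have "(r*x - q)^2 + p^2 > 0" using p by (simp add: add_nonneg_pos)
  ultimately show ?thesis using r_pos by (metis zero_less_mult_pos)
qed

lemma Q2_pos: "Q2 q r x > 0"
proof -
  have "r * Q2 q r x = (r*x + q)^2 + p^2" using r by (simp add: Q2_def power2_eq_square algebra_simps)
  moreover have "(r*x + q)^2 + p^2 > 0" using p by (simp add: add_nonneg_pos)
  ultimately show ?thesis using r_pos by (metis zero_less_mult_pos)
qed

lemma rQ1: "r * Q1 q r x = (r*x - q)^2 + p^2" using r by (simp add: Q1_def power2_eq_square algebra_simps)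
lemma rQ2: "r * Q2 q r x = (r*x + q)^2 + p^2" using r by (simp add: Q2_def power2_eq_square algebra_simps)

lemma D_Q1: "(Q1 q r has_real_derivative (2*r*x - 2*q)) (at x)"
  unfolding Q1_def by (auto intro!: derivative_eq_intros)
lemma D_Q2: "(Q2 q r has_real_derivative (2*r*x + 2*q)) (at x)"
  unfolding Q2_def by (auto intro!: derivative_eq_intros)

lemma D_lnQ1: "((\<lambda>x. ln (Q1 q r x)) has_real_derivative (2*r*x - 2*q) / Q1 q r x) (at x)"
  using DERIV_chain2[OF DERIV_ln_divide[OF Q1_pos] D_Q1] by simp
lemma D_lnQ2: "((\<lambda>x. ln (Q2 q r x)) has_real_derivative (2*r*x + 2*q) / Q2 q r x) (at x)"
  using DERIV_chain2[OF DERIV_ln_divide[OF Q2_pos] D_Q2] by simp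

lemma D_at1: "((\<lambda>x. arctan ((r*x - q)/p)) has_real_derivative p / Q1 q r x) (at x)"
proof -
  have "((\<lambda>x. arctan ((r*x - q)/p)) has_real_derivative inverse (1 + ((r*x - q)/p)^2) * (r/p)) (at x)"
    by (auto intro!: derivative_eq_intros simp: p0)
  moreover have "inverse (1 + ((r*x - q)/p)^2) * (r/p) = p / Q1 q r x"
  proof -
    have "1 + ((r*x - q)/p)^2 = (r * Q1 q r x) / p^2" using p by (simp add: rQ1 field_simps)
    then show ?thesis using p r_pos Q1_pos[of x] by (simp add: field_simps power2_eq_square)
  qed
  ultimately show ?thesis by simp
qed

lemma D_at2: "((\<lambda>x. arctan ((r*x + q)/p)) has_real_derivative p / Q2 q r x) (at x)"
proof -
  have "((\<lambda>x. arctan ((r*x + q)/p)) has_real_derivative inverse (1 + ((r*x + q)/p)^2) * (r/p)) (at x)"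
    by (auto intro!: derivative_eq_intros simp: p0)
  moreover have "inverse (1 + ((r*x + q)/p)^2) * (r/p) = p / Q2 q r x"
  proof -
    have "1 + ((r*x + q)/p)^2 = (r * Q2 q r x) / p^2" using p by (simp add: rQ2 field_simps)
    then show ?thesis using p r_pos Q2_pos[of x] by (simp add: field_simps power2_eq_square)
  qed
  ultimately show ?thesis by simp
qed


lemma D_L: "(Lf q r has_real_derivative ((2*r*x - 2*q) / Q1 q r x + (2*r*x + 2*q) / Q2 q r x) / 2) (at x)"
  unfolding Lf_def[abs_def] using DERIV_cdivide[OF DERIV_add[OF D_lnQ1 D_lnQ2], of 2] .

lemma D_G: "(Gf p q r has_real_derivative
   q/2 * ((2*r*x - 2*q) / Q1 q r x - (2*r*x + 2*q) / Q2 q r x) + p * (p / Q1 q r x + p / Q2 q r x)) (at x)"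
  unfolding Gf_def[abs_def]
  using DERIV_add[OF DERIV_cmult[OF DERIV_diff[OF D_lnQ1 D_lnQ2], of "q/2"] DERIV_cmult[OF DERIV_add[OF D_at1 D_at2], of p]] .

lemma key_identity:
  assumes x: "x \<noteq> 0"
  shows "q/2 * ((2*r*x - 2*q) / Q1 q r x - (2*r*x + 2*q) / Q2 q r x) + p * (p / Q1 q r x + p / Q2 q r x)
       = ((2*r*x - 2*q) / Q1 q r x + (2*r*x + 2*q) / Q2 q r x) / 2 / x"
proof -
  define A where "A = Q1 q r x"
  define B where "B = Q2 q r x"
  have A0: "A > 0" unfolding A_def by (rule Q1_pos)
  have B0: "B > 0" unfolding B_def by (rule Q2_pos)
  have A: "A > 0" "A \<noteq> 0" using A0 by auto
  have B: "B > 0" "B \<noteq> 0" using B0 by auto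
  have h1: "(r*x - q) - x*(q*(r*x-q) + p^2) = -q * A"
    by (simp add: A_def Q1_def r algebra_simps power2_eq_square)
  have h2: "(r*x + q) - x*(p^2 - q*(r*x+q)) = q * B"
    by (simp add: B_def Q2_def r algebra_simps power2_eq_square)
  have e1: "(r*x - q)/(x*A) - (q*(r*x-q) + p^2)/A = -q/x"
  proof -
    have "(r*x - q)/(x*A) - (q*(r*x-q) + p^2)/A = ((r*x - q) - x*(q*(r*x-q) + p^2))/(x*A)"
      using x A by (simp add: field_simps)
    also have "\<dots> = -q/x" using h1 x A by simp
    finally show ?thesis .
  qed
  have e2: "(r*x + q)/(x*B) - (p^2 - q*(r*x+q))/B = q/x"
  proof -
    have "(r*x + q)/(x*B) - (p^2 - q*(r*x+q))/B = ((r*x + q) - x*(p^2 - q*(r*x+q)))/(x*B)"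
      using x B by (simp add: field_simps)
    also have "\<dots> = q/x" using h2 x B by simp
    finally show ?thesis .
  qed
  have lhs: "q/2 * ((2*r*x - 2*q) / A - (2*r*x + 2*q) / B) + p * (p / A + p / B)
     = (q*(r*x-q) + p^2)/A + (p^2 - q*(r*x+q))/B"
    using A B by (simp add: field_simps power2_eq_square)
  have rhs: "((2*r*x - 2*q) / A + (2*r*x + 2*q) / B) / 2 / x = (r*x - q)/(x*A) + (r*x + q)/(x*B)"
    using A B x by (simp add: field_simps)
  show ?thesis unfolding A_def[symmetric] B_def[symmetric] lhs rhs using e1 e2 by simp
qed

lemma D_F:
  assumes x: "x \<noteq> 0"
  shows "(Ff p q r has_real_derivative Lf q r x / x^2) (at x)"
proof -
  let ?L' = "((2*r*x - 2*q) / Q1 q r x + (2*r*x + 2*q) / Q2 q r x) / 2"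
  let ?G' = "q/2 * ((2*r*x - 2*q) / Q1 q r x - (2*r*x + 2*q) / Q2 q r x) + p * (p / Q1 q r x + p / Q2 q r x)"
  have "((\<lambda>y. - (Lf q r y / y) + Gf p q r y) has_real_derivative
      - ((?L' * x - Lf q r x * 1) / (x * x)) + ?G') (at x)"
    using DERIV_add[OF DERIV_minus[OF DERIV_divide[OF D_L DERIV_ident x]] D_G] .
  moreover have "- ((?L' * x - Lf q r x * 1) / (x * x)) + ?G' = Lf q r x / x^2"
    using key_identity[OF x] x by (simp add: field_simps power2_eq_square)
  ultimately have d: "((\<lambda>y. - (Lf q r y / y) + Gf p q r y) has_real_derivative Lf q r x / x^2) (at x)" by simp
  show ?thesis
    by (rule has_field_derivative_transform_within_open[OF d, of "-{0}"]) (auto simp: x Ff_def)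
qed


lemma L0: "Lf q r 0 = 0" by (simp add: Lf_def Q1_def Q2_def)
lemma G0: "Gf p q r 0 = 0" by (simp add: Gf_def Q1_def Q2_def arctan_minus)

lemma cont_F: "continuous_on UNIV (Ff p q r)"
proof -
  have "isCont (Ff p q r) x" for x
  proof (cases "x = 0")
    case False
    then show ?thesis using DERIV_isCont[OF D_F[OF False]] by simp
  next
    case True
    have "((\<lambda>y. (Lf q r y - Lf q r 0) / (y - 0)) \<longlongrightarrow> ((2*r*0 - 2*q) / Q1 q r 0 + (2*r*0 + 2*q) / Q2 q r 0) / 2) (at 0)"
      using D_L[of 0] by (simp add: has_field_derivative_iff)
    then have l1: "((\<lambda>y. Lf q r y / y) \<longlongrightarrow> 0) (at 0)" by (simp add: L0 Q1_def Q2_def)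
    have l2: "((\<lambda>y. Gf p q r y) \<longlongrightarrow> 0) (at 0)"
      using DERIV_isCont[OF D_G[of 0]] G0 by (simp add: isCont_def)
    have "((\<lambda>y. - (Lf q r y / y) + Gf p q r y) \<longlongrightarrow> - 0 + 0) (at 0)"
      by (intro tendsto_intros l1 l2)
    then have "((\<lambda>y. - (Lf q r y / y) + Gf p q r y) \<longlongrightarrow> Ff p q r 0) (at 0)"
      by (simp add: Ff_def G0)
    then have "(Ff p q r \<longlongrightarrow> Ff p q r 0) (at 0)"
      by (rule Lim_transform_eventually) (auto simp: eventually_at_filter Ff_def)
    then show ?thesis using True by (simp add: isCont_def)
  qed
  then show ?thesis by (simp add: continuous_at_imp_continuous_on)
qed

lemma L_even: "Lf q r (-x) = Lf q r x" by (simp add: Lf_def Q1_def Q2_def)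
lemma G_odd: "Gf p q r (-x) = - Gf p q r x"
proof -
  have "(r*(-x) - q)/p = - ((r*x + q)/p)" "(r*(-x) + q)/p = - ((r*x - q)/p)" by (simp_all add: field_simps p0)
  then show ?thesis by (simp add: Gf_def Q1_def Q2_def arctan_minus algebra_simps)
qed

lemma F_diff: "k > 0 \<Longrightarrow> Ff p q r k - Ff p q r (-k) = 2 * Gf p q r k - 2 * (Lf q r k / k)"
  by (simp add: Ff_def L_even G_odd)

lemma lim_L: "((\<lambda>x. Lf q r x / x) \<longlongrightarrow> 0) at_top"
proof -
  have "((\<lambda>x. ln (1 - 2*q*x + r*x^2) / x) \<longlongrightarrow> 0) at_top" using r_pos by real_asymp
  moreover have "((\<lambda>x. ln (1 + 2*q*x + r*x^2) / x) \<longlongrightarrow> 0) at_top" using r_pos by real_asymp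
  ultimately have "((\<lambda>x. (ln (1 - 2*q*x + r*x^2) / x + ln (1 + 2*q*x + r*x^2) / x) / 2) \<longlongrightarrow> (0 + 0) / 2) at_top"
    by (intro tendsto_divide tendsto_add tendsto_const) simp_all
  moreover have "Lf q r x / x = (ln (1 - 2*q*x + r*x^2) / x + ln (1 + 2*q*x + r*x^2) / x) / 2" for x
    by (simp add: Lf_def Q1_def Q2_def add_divide_distrib)
  ultimately show ?thesis by (simp only:) simp
qed

lemma lim_G: "(Gf p q r \<longlongrightarrow> p * pi) at_top"
proof -
  have a: "((\<lambda>x. ln (1 - 2*q*x + r*x^2) - ln (1 + 2*q*x + r*x^2)) \<longlongrightarrow> 0) at_top" using r_pos by real_asymp
  have b: "((\<lambda>x. arctan ((r*x - q)/p)) \<longlongrightarrow> pi/2) at_top" using r_pos p by real_asymp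
  have c: "((\<lambda>x. arctan ((r*x + q)/p)) \<longlongrightarrow> pi/2) at_top" using r_pos p by real_asymp
  have "((\<lambda>x. q/2 * (ln (1 - 2*q*x + r*x^2) - ln (1 + 2*q*x + r*x^2)) +
      p * (arctan ((r*x - q)/p) + arctan ((r*x + q)/p))) \<longlongrightarrow> q/2 * 0 + p * (pi/2 + pi/2)) at_top"
    by (intro tendsto_intros a b c)
  then show ?thesis by (simp add: Gf_def[abs_def] Q1_def Q2_def)
qed

lemma lim_Fdiff: "((\<lambda>k. Ff p q r k - Ff p q r (-k)) \<longlongrightarrow> 2 * pi * p) at_top"
proof -
  have "((\<lambda>k. 2 * Gf p q r k - 2 * (Lf q r k / k)) \<longlongrightarrow> 2 * (p * pi) - 2 * 0) at_top"
    by (intro tendsto_intros lim_G lim_L)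
  then have "((\<lambda>k. 2 * Gf p q r k - 2 * (Lf q r k / k)) \<longlongrightarrow> 2 * pi * p) at_top" by (simp add: ac_simps)
  moreover have "eventually (\<lambda>k. 2 * Gf p q r k - 2 * (Lf q r k / k) = Ff p q r k - Ff p q r (-k)) at_top"
    using eventually_gt_at_top[of "0::real"] by eventually_elim (simp add: F_diff)
  ultimately show ?thesis by (rule Lim_transform_eventually)
qed

end

lemma cmod_Q:
  fixes s :: complex and x :: real
  assumes r: "r = (Re s)^2 + (Im s)^2" and ps: "Re s > 0"
  shows "ln (cmod (1 + s^2 * (of_real x)^2)) = Lf (Im s) r x"
proof -
  define p where "p = Re s" define q where "q = Im s"
  have sp: "s = Complex p q" by (simp add: p_def q_def)
  have re: "Re (1 + s^2 * (of_real x)^2) = 1 + (p^2 - q^2) * x^2"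
    by (simp add: sp power2_eq_square)
  have im: "Im (1 + s^2 * (of_real x)^2) = 2*p*q*x^2"
    by (simp add: sp power2_eq_square)
  have "(cmod (1 + s^2 * (of_real x)^2))^2 = (1 + (p^2 - q^2) * x^2)^2 + (2*p*q*x^2)^2"
    unfolding cmod_power2 re im ..
  also have "\<dots> = Q1 q r x * Q2 q r x"
    by (simp add: Q1_def Q2_def r p_def[symmetric] q_def[symmetric] power2_eq_square algebra_simps)
  finally have e: "(cmod (1 + s^2 * (of_real x)^2))^2 = Q1 q r x * Q2 q r x" .
  have "cmod (1 + s^2 * (of_real x)^2) = sqrt (Q1 q r x * Q2 q r x)"
    using e by (metis norm_ge_zero real_sqrt_unique)
  moreover have Q1: "Q1 q r x > 0" using Q1_pos[of p r q x] ps r by (simp add: p_def q_def)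
  moreover have Q2: "Q2 q r x > 0" using Q2_pos[of p r q x] ps r by (simp add: p_def q_def)
  ultimately have "ln (cmod (1 + s^2 * (of_real x)^2)) = ln (Q1 q r x * Q2 q r x) / 2"
    by (simp add: ln_sqrt)
  then show ?thesis using Q1 Q2 by (simp add: ln_mult Lf_def q_def)
qed


lemma root_term:
  fixes a :: complex
  assumes nz: "\<And>x::real. 1 + a^2 * (of_real x)^2 \<noteq> 0"
  shows "\<exists>F. continuous_on UNIV F \<and>
    (\<forall>x. x \<noteq> 0 \<longrightarrow> (F has_real_derivative ln (cmod (1 + a^2 * (of_real x)^2)) / x^2) (at x)) \<and>
    ((\<lambda>k. F k - F (-k)) \<longlongrightarrow> 2 * pi * \<bar>Re a\<bar>) at_top"
proof (cases "a = 0")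
  case True
  then show ?thesis by (intro exI[of _ "\<lambda>_. 0"]) (auto intro!: derivative_eq_intros)
next
  case False
  have ra: "Re a \<noteq> 0"
  proof
    assume ra0: "Re a = 0"
    then have b: "Im a \<noteq> 0" using False complex_eq_iff by auto
    have ai: "a = \<i> * of_real (Im a)" using ra0 by (simp add: complex_eq_iff)
    have "1 + (\<i> * of_real (Im a))^2 * (of_real (1 / Im a))^2 = (0::complex)"
      using b by (simp add: power2_eq_square field_simps)
    then have "1 + a^2 * (of_real (1 / Im a))^2 = 0" using ai by metis
    then show False using nz by blast
  qed
  define s where "s = (if Re a > 0 then a else -a)"
  have ps: "Re s > 0" using ra by (auto simp: s_def)
  have ss: "s^2 = a^2" by (simp add: s_def)
  have pa: "Re s = \<bar>Re a\<bar>" by (auto simp: s_def)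
  define r where "r = (Re s)^2 + (Im s)^2"
  have lnq: "ln (cmod (1 + a^2 * (of_real x)^2)) = Lf (Im s) r x" for x
    using cmod_Q[OF r_def ps, of x] ss by simp
  show ?thesis
  proof (intro exI[of _ "Ff (Re s) (Im s) r"] conjI allI impI)
    show "continuous_on UNIV (Ff (Re s) (Im s) r)" using cont_F[OF ps r_def] .
    fix x :: real assume "x \<noteq> 0"
    then show "(Ff (Re s) (Im s) r has_real_derivative ln (cmod (1 + a^2 * (of_real x)^2)) / x^2) (at x)"
      using D_F[OF ps r_def] lnq by simp
  next
    show "((\<lambda>k. Ff (Re s) (Im s) r k - Ff (Re s) (Im s) r (-k)) \<longlongrightarrow> 2 * pi * \<bar>Re a\<bar>) at_top"
      using lim_Fdiff[OF ps r_def] pa by simp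
  qed
qed




lemma prod_list_nth: "(\<Prod>x\<leftarrow>xs. f x) = (\<Prod>i<length xs. f (xs ! i))"
  by (induction xs) (simp_all add: prod.lessThan_Suc_shift del: prod.lessThan_Suc)

lemma order_prod_linear:
  "order z (\<Prod>a\<leftarrow>as. [:-a, 1:]) = count_list as (z::complex)"
proof (induction as)
  case Nil then show ?case by (simp add: order_0I)
next
  case (Cons a as)
  have nz: "(\<Prod>a\<leftarrow>as. [:-a, 1:]) \<noteq> (0::complex poly)"
    by (auto simp: prod_list_zero_iff)
  have l: "[:-a, 1:] \<noteq> (0::complex poly)" by simp
  have nz2: "[:-a, 1:] * (\<Prod>a\<leftarrow>as. [:-a, 1:]) \<noteq> (0::complex poly)"
    using nz l by (metis mult_eq_0_iff)
  have o1: "order z [:-a, 1:] = (if z = a then 1 else 0)"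
  proof (cases "z = a")
    case True then show ?thesis using order_power_n_n[of a 1] by simp
  next
    case False then show ?thesis by (simp add: order_0I)
  qed
  show ?case using order_mult[OF nz2] o1 Cons by simp
qed

lemma sum_count_real:
  "(\<Sum>a\<leftarrow>xs. (f a::real)) = (\<Sum>x\<in>set xs. of_nat (count_list xs x) * f x)"
proof (induction xs)
  case (Cons x xs)
  show ?case
  proof (cases "x \<in> set xs")
    case True
    have "(\<Sum>y\<in>set (x#xs). of_nat (count_list (x#xs) y) * f y) =
        (\<Sum>y\<in>set xs. of_nat (count_list xs y) * f y + (if y = x then f x else 0))"
      using True by (intro sum.cong) (auto simp: insert_absorb algebra_simps)
    also have "\<dots> = (\<Sum>y\<in>set xs. of_nat (count_list xs y) * f y) + f x"
      using True by (simp add: sum.distrib)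
    also have "\<dots> = (\<Sum>a\<leftarrow>x#xs. f a)" using Cons.IH by simp
    finally show ?thesis by simp
  next
    case False
    then have "\<And>y. y \<in> set xs \<Longrightarrow> x \<noteq> y" by blast
    then show ?thesis using False by (simp add: Cons.IH)
  qed
qed simp

lemma energy_as:
  assumes cp: "char_pol n sig = (\<Prod>a\<leftarrow>as. [:-a, 1:])"
  shows "energy n sig = (\<Sum>a\<leftarrow>as. \<bar>Re a\<bar>)"
proof -
  have roots: "{z. poly (char_pol n sig) z = 0} = set as"
    unfolding cp by (auto simp: poly_prod_list prod_list_zero_iff)
  have "energy n sig = (\<Sum>z\<in>set as. of_nat (order z (char_pol n sig)) * \<bar>Re z\<bar>)"
    unfolding energy_def roots ..
  also have "\<dots> = (\<Sum>z\<in>set as. of_nat (count_list as z) * \<bar>Re z\<bar>)"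
    unfolding cp order_prod_linear ..
  also have "\<dots> = (\<Sum>a\<leftarrow>as. \<bar>Re a\<bar>)" by (rule sum_count_real[symmetric])
  finally show ?thesis .
qed

definition Rf :: "nat \<Rightarrow> (nat \<Rightarrow> nat \<Rightarrow> int) \<Rightarrow> real \<Rightarrow> real" where
  "Rf n sig x = 1 + (\<Sum>j = 1..n div 2. real (c_lin n sig (2*j)) * x^(2*j))"

lemma Rf_ge1: "Rf n sig x \<ge> 1"
proof -
  have "(\<Sum>j = 1..n div 2. real (c_lin n sig (2*j)) * x^(2*j)) \<ge> 0"
    by (intro sum_nonneg mult_nonneg_nonneg) (simp_all add: power_mult)
  then show ?thesis by (simp add: Rf_def)
qed

lemma Rf_even: "Rf n sig (-x) = Rf n sig x"
  by (simp add: Rf_def power_mult)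

lemma Rf_0: "Rf n sig 0 = 1"
  by (auto simp: Rf_def intro!: sum.neutral)

lemma prod_list_one: "(\<Prod>a\<leftarrow>as. (1::'a::comm_monoid_mult)) = 1"
  by (induction as) simp_all

lemma prod_list_mult_const: "(\<Prod>a\<leftarrow>as. (c::'a::comm_monoid_mult) * g a) = c ^ length as * (\<Prod>a\<leftarrow>as. g a)"
  by (induction as) (simp_all add: ac_simps)

lemma prod_list_mult2: "(\<Prod>a\<leftarrow>as. (f a::'a::comm_monoid_mult) * g a) = (\<Prod>a\<leftarrow>as. f a) * (\<Prod>a\<leftarrow>as. g a)"
  by (induction as) (simp_all add: ac_simps)

lemma Rf_prod:
  assumes D: "sig \<in> Delta1 n" and cp: "char_pol n sig = (\<Prod>a\<leftarrow>as. [:-a, 1:])"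
    and len: "length as = n" and x: "x \<noteq> 0"
  shows "complex_of_real (Rf n sig x) = (\<Prod>a\<leftarrow>as. 1 + \<i> * a * of_real x)"
proof -
  let ?c = "\<i> / complex_of_real x"
  have c0: "?c \<noteq> 0" using x by simp
  have "?c ^ n * of_real (Rf n sig x) = poly (char_pol n sig) ?c"
    using poly_char_pol_ix[OF D x] W_eq[OF D, of x] by (simp add: Rf_def)
  also have "\<dots> = (\<Prod>a\<leftarrow>as. ?c - a)"
    unfolding cp poly_prod_list by (simp add: o_def)
  also have "\<dots> = (\<Prod>a\<leftarrow>as. ?c * (1 + \<i> * a * of_real x))"
    by (rule arg_cong[where f = prod_list], rule map_cong[OF refl]) (use x in \<open>simp add: field_simps\<close>)
  also have "\<dots> = ?c ^ n * (\<Prod>a\<leftarrow>as. 1 + \<i> * a * of_real x)"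
    using prod_list_mult_const len by metis
  finally show ?thesis using c0 by simp
qed

lemma Rf_sq:
  assumes D: "sig \<in> Delta1 n" and cp: "char_pol n sig = (\<Prod>a\<leftarrow>as. [:-a, 1:])"
    and len: "length as = n"
  shows "complex_of_real (Rf n sig x) ^ 2 = (\<Prod>a\<leftarrow>as. 1 + a^2 * (of_real x)^2)"
proof (cases "x = 0")
  case True then show ?thesis by (simp add: Rf_0 prod_list_one)
next
  case False
  have "complex_of_real (Rf n sig x) ^ 2 = of_real (Rf n sig x) * of_real (Rf n sig (-x))"
    by (simp add: Rf_even power2_eq_square)
  also have "\<dots> = (\<Prod>a\<leftarrow>as. 1 + \<i> * a * of_real x) * (\<Prod>a\<leftarrow>as. 1 + \<i> * a * of_real (-x))"
    using Rf_prod[OF D cp len False] Rf_prod[OF D cp len, of "-x"] False by simp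
  also have "\<dots> = (\<Prod>a\<leftarrow>as. (1 + \<i> * a * of_real x) * (1 + \<i> * a * of_real (-x)))"
    by (simp add: prod_list_mult2)
  also have "\<dots> = (\<Prod>a\<leftarrow>as. 1 + a^2 * (of_real x)^2)"
    by (rule arg_cong[where f = prod_list], rule map_cong[OF refl])
       (simp add: algebra_simps power2_eq_square)
  finally show ?thesis .
qed


lemma sum_list_nth: "(\<Sum>x\<leftarrow>xs. f x) = (\<Sum>i<length xs. f (xs ! i))"
  by (induction xs) (simp_all add: sum.lessThan_Suc_shift del: sum.lessThan_Suc)

lemma norm_prod_list_c: "cmod (\<Prod>a\<leftarrow>as. f a) = (\<Prod>a\<leftarrow>as. cmod (f a))"
  by (induction as) (simp_all add: norm_mult)

lemma prod_list_pos_r: "(\<And>a. a \<in> set as \<Longrightarrow> (f a::real) > 0) \<Longrightarrow> (\<Prod>a\<leftarrow>as. f a) > 0"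
  by (induction as) auto

lemma ln_prod_list_pos: "(\<And>a. a \<in> set as \<Longrightarrow> (f a::real) > 0) \<Longrightarrow> ln (\<Prod>a\<leftarrow>as. f a) = (\<Sum>a\<leftarrow>as. ln (f a))"
proof (induction as)
  case (Cons a as)
  have "(\<Prod>a\<leftarrow>as. f a) > 0" using Cons.prems by (intro prod_list_pos_r) auto
  moreover have "f a > 0" using Cons.prems by simp
  ultimately have "ln (f a * (\<Prod>a\<leftarrow>as. f a)) = ln (f a) + ln (\<Prod>a\<leftarrow>as. f a)"
    by (intro ln_mult_pos)
  then show ?case using Cons by simp
qed simp

lemma ln_Rf:
  assumes D: "sig \<in> Delta1 n" and cp: "char_pol n sig = (\<Prod>a\<leftarrow>as. [:-a, 1:])"
    and len: "length as = n"
  shows "ln (Rf n sig x) = (\<Sum>a\<leftarrow>as. ln (cmod (1 + a^2 * (of_real x)^2))) / 2"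
    and "a \<in> set as \<Longrightarrow> 1 + a^2 * (of_real x)^2 \<noteq> 0"
proof -
  have sq: "complex_of_real (Rf n sig x) ^ 2 = (\<Prod>a\<leftarrow>as. 1 + a^2 * (of_real x)^2)"
    using Rf_sq[OF D cp len] .
  have R1: "Rf n sig x \<ge> 1" by (rule Rf_ge1)
  have "(\<Prod>a\<leftarrow>as. 1 + a^2 * (of_real x)^2) \<noteq> 0" using sq R1 by (metis of_real_eq_0_iff power_eq_0_iff not_one_le_zero)
  then have nz: "\<And>a. a \<in> set as \<Longrightarrow> 1 + a^2 * (of_real x)^2 \<noteq> 0"
    by (auto simp: prod_list_zero_iff)
  then show "a \<in> set as \<Longrightarrow> 1 + a^2 * (of_real x)^2 \<noteq> 0" by blast
  have "(Rf n sig x)^2 = cmod (complex_of_real (Rf n sig x) ^ 2)"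
    using R1 by (simp add: norm_power)
  also have "\<dots> = (\<Prod>a\<leftarrow>as. cmod (1 + a^2 * (of_real x)^2))"
    unfolding sq norm_prod_list_c ..
  finally have e: "(Rf n sig x)^2 = (\<Prod>a\<leftarrow>as. cmod (1 + a^2 * (of_real x)^2))" .
  have "2 * ln (Rf n sig x) = ln ((Rf n sig x)^2)" using R1 by (simp add: ln_realpow)
  also have "\<dots> = (\<Sum>a\<leftarrow>as. ln (cmod (1 + a^2 * (of_real x)^2)))"
    unfolding e by (rule ln_prod_list_pos) (use nz in simp)
  finally show "ln (Rf n sig x) = (\<Sum>a\<leftarrow>as. ln (cmod (1 + a^2 * (of_real x)^2))) / 2" by simp
qed


lemma integral_energy:
  assumes D: "sig \<in> Delta1 n"
  shows "((\<lambda>z::real. (1/pi) * (1/z^2) * ln (Rf n sig z)) has_integral energy n sig) UNIV"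
proof -
  have A: "adj_mat n sig \<in> carrier_mat n n" by (simp add: adj_mat_def)
  obtain as where cp: "char_pol n sig = (\<Prod>a\<leftarrow>as. [:-a, 1:])" and len: "length as = n"
    using char_poly_factorized[OF A] unfolding char_pol_def by blast
  define g where "g z = (1/pi) * (1/z^2) * ln (Rf n sig z)" for z
  define h where "h i x = ln (cmod (1 + (as!i)^2 * (of_real x)^2)) / x^2" for i x
  have nzi: "1 + (as!i)^2 * (of_real x)^2 \<noteq> 0" if "i < n" for i x
    using ln_Rf(2)[OF D cp len, of "as!i" x] that len by simp
  have "\<forall>i\<in>{..<n}. \<exists>F. continuous_on UNIV F \<and> (\<forall>x. x \<noteq> 0 \<longrightarrow> (F has_real_derivative h i x) (at x)) \<and>
      ((\<lambda>k. F k - F (-k)) \<longlongrightarrow> 2 * pi * \<bar>Re (as!i)\<bar>) at_top"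
    using root_term nzi unfolding h_def by blast
  then obtain Fs where Fs: "\<forall>i\<in>{..<n}. continuous_on UNIV (Fs i) \<and>
      (\<forall>x. x \<noteq> 0 \<longrightarrow> (Fs i has_real_derivative h i x) (at x)) \<and>
      ((\<lambda>k. Fs i k - Fs i (-k)) \<longlongrightarrow> 2 * pi * \<bar>Re (as!i)\<bar>) at_top"
    by (metis bchoice)
  define FF where "FF x = (\<Sum>i<n. Fs i x / (2*pi))" for x
  have g_eq: "g x = (\<Sum>i<n. h i x / (2*pi))" for x
  proof -
    define S where "S = (\<Sum>i<n. ln (cmod (1 + (as!i)^2 * (of_real x)^2)))"
    have e1: "ln (Rf n sig x) = S / 2"
      using ln_Rf(1)[OF D cp len, of x] sum_list_nth[of "\<lambda>a. ln (cmod (1 + a^2 * (of_real x)^2))" as] len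
      by (simp add: S_def)
    have e2: "(\<Sum>i<n. h i x / (2*pi)) = S / x^2 / (2*pi)"
      unfolding h_def S_def by (simp add: sum_divide_distrib)
    have "g x = (1/pi) * (1/x^2) * (S/2)" by (simp add: g_def e1)
    also have "\<dots> = S / x^2 / (2*pi)"
      by (cases "x = 0") (simp_all add: field_simps)
    finally show ?thesis using e2 by simp
  qed
  have cont: "continuous_on UNIV FF"
    unfolding FF_def by (intro continuous_on_sum continuous_on_divide continuous_on_const) (use Fs in auto)
  have der: "(FF has_real_derivative g x) (at x)" if x: "x \<noteq> 0" for x
    unfolding FF_def g_eq by (intro DERIV_sum DERIV_cdivide) (use Fs x in auto)
  have ftc: "(g has_integral FF (real k) - FF (- real k)) {- real k..real k}" for k :: nat
  proof (rule fundamental_theorem_of_calculus_interior_strong[of "{0}"])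
    show "continuous_on {- real k..real k} FF" using cont by (rule continuous_on_subset) simp
    fix x assume "x \<in> {- real k<..<real k} - {0}"
    then show "(FF has_vector_derivative g x) (at x)"
      using der[of x] by (simp add: has_real_derivative_iff_has_vector_derivative)
  qed simp_all
  define fk where "fk k x = (if x \<in> {- real k..real k} then g x else 0)" for k :: nat and x
  have fk_int: "(fk k has_integral FF (real k) - FF (- real k)) UNIV" for k
    unfolding fk_def using ftc[of k] has_integral_restrict_UNIV by blast
  have g_nonneg: "g x \<ge> 0" for x
  proof -
    have "ln (Rf n sig x) \<ge> 0" using Rf_ge1 by simp
    then show ?thesis by (simp add: g_def)
  qed
  have mono: "fk k x \<le> fk (Suc k) x" for k x
    using g_nonneg[of x] by (auto simp: fk_def)
  have pw: "(\<lambda>k. fk k x) \<longlonglongrightarrow> g x" for x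
  proof -
    have "eventually (\<lambda>k. g x = fk k x) sequentially"
    proof (rule eventually_sequentiallyI[of "nat \<lceil>\<bar>x\<bar>\<rceil>"])
      fix k assume "nat \<lceil>\<bar>x\<bar>\<rceil> \<le> k"
      then have "\<bar>x\<bar> \<le> real k" by linarith
      then show "g x = fk k x" by (auto simp: fk_def)
    qed
    then show ?thesis by (rule Lim_transform_eventually[OF tendsto_const])
  qed
  have limFF: "((\<lambda>t. FF t - FF (-t)) \<longlongrightarrow> (\<Sum>i<n. 2 * pi * \<bar>Re (as!i)\<bar> / (2*pi))) at_top"
  proof -
    have "((\<lambda>t. \<Sum>i<n. (Fs i t - Fs i (-t)) / (2*pi)) \<longlongrightarrow> (\<Sum>i<n. 2 * pi * \<bar>Re (as!i)\<bar> / (2*pi))) at_top"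
      by (intro tendsto_sum tendsto_divide tendsto_const) (use Fs in auto)
    moreover have "(\<Sum>i<n. (Fs i t - Fs i (-t)) / (2*pi)) = FF t - FF (-t)" for t
      unfolding FF_def by (simp add: sum_subtractf diff_divide_distrib)
    ultimately show ?thesis by simp
  qed
  have lim: "(\<lambda>k. FF (real k) - FF (- real k)) \<longlonglongrightarrow> (\<Sum>i<n. \<bar>Re (as!i)\<bar>)"
    using filterlim_compose[OF limFF filterlim_real_sequentially] by simp
  have "(g has_integral (\<Sum>i<n. \<bar>Re (as!i)\<bar>)) UNIV"
    by (rule has_integral_monotone_convergence_increasing[OF fk_int mono pw lim])
  moreover have "energy n sig = (\<Sum>i<n. \<bar>Re (as!i)\<bar>)"
    using energy_as[OF cp] sum_list_nth[of "\<lambda>a. \<bar>Re a\<bar>" as] len by simp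
  ultimately show ?thesis by (simp add: g_def[abs_def])
qed


lemma Rf_mono_x:
  assumes "0 \<le> x" "x \<le> y" shows "Rf n sig x \<le> Rf n sig y"
  unfolding Rf_def using assms
  by (intro add_left_mono sum_mono mult_left_mono power_mono) auto

lemma strict_energy:
  assumes D1: "s1 \<in> Delta1 n" and D2: "s2 \<in> Delta1 n" and ql: "quasi_less n s1 s2"
  shows "energy n s1 < energy n s2"
proof -
  define g1 where "g1 z = (1/pi) * (1/z^2) * ln (Rf n s1 z)" for z :: real
  define g2 where "g2 z = (1/pi) * (1/z^2) * ln (Rf n s2 z)" for z :: real
  have I1: "(g1 has_integral energy n s1) UNIV" using integral_energy[OF D1] by (simp add: g1_def[abs_def])
  have I2: "(g2 has_integral energy n s2) UNIV" using integral_energy[OF D2] by (simp add: g2_def[abs_def])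
  have Id: "((\<lambda>x. g2 x - g1 x) has_integral energy n s2 - energy n s1) UNIV"
    using has_integral_diff[OF I2 I1] .
  have le: "\<forall>j\<in>{1..n div 2}. c_lin n s1 (2*j) \<le> c_lin n s2 (2*j)"
    using ql by (simp add: quasi_less_def quasi_le_def)
  obtain j0 where j0: "j0 \<in> {1..n div 2}" "c_lin n s1 (2*j0) < c_lin n s2 (2*j0)"
    using ql by (auto simp: quasi_less_def)
  have Rdiff: "Rf n s2 x - Rf n s1 x = (\<Sum>j = 1..n div 2. (real (c_lin n s2 (2*j)) - real (c_lin n s1 (2*j))) * x^(2*j))" for x
    unfolding Rf_def by (simp add: sum_subtractf left_diff_distrib)
  have Rle: "Rf n s1 x \<le> Rf n s2 x" for x
  proof -
    have "0 \<le> (\<Sum>j = 1..n div 2. (real (c_lin n s2 (2*j)) - real (c_lin n s1 (2*j))) * x^(2*j))"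
      using le by (intro sum_nonneg mult_nonneg_nonneg) (auto simp: power_mult)
    then show ?thesis using Rdiff[of x] by simp
  qed
  have d_nonneg: "g2 x - g1 x \<ge> 0" for x
  proof -
    have "ln (Rf n s1 x) \<le> ln (Rf n s2 x)"
      using Rle[of x] Rf_ge1[of n s1 x] by simp
    moreover have "(1/pi) * (1/x^2) \<ge> 0" by simp
    ultimately have "(1/pi) * (1/x^2) * ln (Rf n s1 x) \<le> (1/pi) * (1/x^2) * ln (Rf n s2 x)"
      by (rule mult_left_mono)
    then show ?thesis unfolding g1_def g2_def by simp
  qed
  define M where "M = Rf n s2 2"
  have M1: "M \<ge> 1" using Rf_ge1 by (simp add: M_def)
  define \<delta> where "\<delta> = 1 / (4 * pi * M)"
  have \<delta>pos: "\<delta> > 0" using M1 by (simp add: \<delta>_def)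
  have dlow: "g2 x - g1 x \<ge> \<delta>" if x: "x \<in> {1..2}" for x
  proof -
    have x1: "x \<ge> 1" "x \<le> 2" using x by auto
    have "(real (c_lin n s2 (2*j0)) - real (c_lin n s1 (2*j0))) * x^(2*j0) \<le>
        (\<Sum>j = 1..n div 2. (real (c_lin n s2 (2*j)) - real (c_lin n s1 (2*j))) * x^(2*j))"
      using j0(1) le x1 by (intro member_le_sum) (auto intro!: mult_nonneg_nonneg)
    moreover have "1 \<le> (real (c_lin n s2 (2*j0)) - real (c_lin n s1 (2*j0))) * x^(2*j0)"
    proof -
      have "1 \<le> real (c_lin n s2 (2*j0)) - real (c_lin n s1 (2*j0))" using j0(2) by linarith
      moreover have "1 \<le> x^(2*j0)" using x1 by (simp add: one_le_power)
      ultimately show ?thesis by (metis mult_mono' mult_1 zero_le_one)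
    qed
    ultimately have gap: "Rf n s2 x - Rf n s1 x \<ge> 1" using Rdiff[of x] by simp
    have R2pos: "Rf n s2 x > 0" using Rf_ge1[of n s2 x] by simp
    have R1pos: "Rf n s1 x > 0" using Rf_ge1[of n s1 x] by simp
    have "ln (Rf n s1 x / Rf n s2 x) \<le> Rf n s1 x / Rf n s2 x - 1"
      using R1pos R2pos by (intro ln_le_minus_one) simp
    then have "ln (Rf n s2 x) - ln (Rf n s1 x) \<ge> 1 - Rf n s1 x / Rf n s2 x"
      using R1pos R2pos by (simp add: ln_div)
    also have "1 - Rf n s1 x / Rf n s2 x = (Rf n s2 x - Rf n s1 x) / Rf n s2 x"
      using R2pos by (simp add: field_simps)
    also have "\<dots> \<ge> 1 / Rf n s2 x" using gap R2pos by (simp add: divide_right_mono)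
    also have "1 / Rf n s2 x \<ge> 1 / M"
      unfolding M_def using Rf_mono_x[of x 2 n s2] x1 R2pos by (simp add: frac_le)
    finally have lg: "ln (Rf n s2 x) - ln (Rf n s1 x) \<ge> 1 / M" .
    have ix: "1 / x^2 \<ge> 1/4"
    proof -
      have "x^2 \<le> 4" using x1 by (simp add: power2_eq_square mult_mono'[of x 2 x 2, simplified])
      moreover have "x^2 > 0" using x1 by simp
      ultimately show ?thesis by (simp add: frac_le)
    qed
    have "\<delta> = (1/pi) * (1/4) * (1/M)" by (simp add: \<delta>_def)
    also have "\<dots> \<le> (1/pi) * (1/x^2) * (ln (Rf n s2 x) - ln (Rf n s1 x))"
      using ix lg M1 by (intro mult_mono mult_left_mono) auto
    also have "\<dots> = g2 x - g1 x" by (simp add: g1_def g2_def right_diff_distrib)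
    finally show ?thesis .
  qed
  have Ik: "((\<lambda>x::real. if x \<in> {1..2} then \<delta> else 0) has_integral \<delta>) UNIV"
  proof -
    have "((\<lambda>x. \<delta>) has_integral \<delta>) {1..2::real}" using has_integral_const_real[of \<delta> "1::real" 2] by simp
    then show ?thesis using has_integral_restrict_UNIV[of "{1..2::real}" "\<lambda>x. \<delta>" \<delta>] by simp
  qed
  have "\<delta> \<le> energy n s2 - energy n s1"
    by (rule has_integral_le[OF Ik Id]) (use dlow d_nonneg in auto)
  then show ?thesis using \<delta>pos by simp
qed



theorem theorem3p1:
  fixes n :: nat
  shows "(\<forall>sig \<in> Delta1 n.
            ((\<lambda>z::real. (1 / pi) * (1 / z^2) *
                ln (1 + (\<Sum>j = 1..n div 2. real (c_lin n sig (2*j)) * z^(2*j))))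
              has_integral energy n sig) UNIV) \<and>
         (\<forall>s1 \<in> Delta1 n. \<forall>s2 \<in> Delta1 n.
            quasi_less n s1 s2 \<longrightarrow> energy n s1 < energy n s2)"
proof (intro conjI ballI impI)
  fix sig assume "sig \<in> Delta1 n"
  then show "((\<lambda>z::real. (1 / pi) * (1 / z^2) *
                ln (1 + (\<Sum>j = 1..n div 2. real (c_lin n sig (2*j)) * z^(2*j))))
              has_integral energy n sig) UNIV"
    using integral_energy[of sig n] unfolding Rf_def by blast
next
  fix s1 s2 assume "s1 \<in> Delta1 n" "s2 \<in> Delta1 n" "quasi_less n s1 s2"
  then show "energy n s1 < energy n s2" by (rule strict_energy)
qed

end
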